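(* Let $r\ge2$ be an integer. If a sequence of positive integers $A$ satisfies $A(n)\le\frac{r-1}{140}(\log_2 n)^2$ for all sufficiently large $n$, then $A$ is not $r$-Ramsey complete.
   Context: $A(n)=|A\cap[n]|$ is the number of terms of $A$ that are at most $n$. For a sequence $S$ of positive integers, $\Sigma(S)$ is the set of sums of distinct terms of $S$. A sequence $A$ is $r$-Ramsey complete if, whenever $A$ is partitioned into $r$ classes $A_1,\dots,A_r$, every sufficiently large positive integer lies in $\bigcup_{i}\Sigma(A_i)$. *)

theory Defs
  imports Complex_Main
begin

definition count_upto :: "nat set \<Rightarrow> nat \<Rightarrow> nat" where
  "count_upto A n = card (A \<inter> {1..n})"

definition subsums :: "nat set \<Rightarrow> nat set" where
  "subsums S = {\<Sum>F | F. F \<subseteq> S \<and> finite F}"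

definition ramsey_complete :: "nat \<Rightarrow> nat set \<Rightarrow> bool" where
  "ramsey_complete r A \<longleftrightarrow>
     (\<forall>c :: nat \<Rightarrow> nat. (\<forall>a\<in>A. c a < r) \<longrightarrow>
        (\<exists>N. \<forall>n\<ge>N. \<exists>i<r. n \<in> subsums {a \<in> A. c a = i}))"

end

theory Submission
  imports Defs
begin


lemma card_small_subsets:
  fixes B :: "nat set" and la Bd :: real
  assumes fin: "finite B" and la: "la \<ge> 0"
  shows "real (card {S. S \<subseteq> B \<and> real (\<Sum>S) \<le> Bd}) \<le> exp (la * Bd) * (\<Prod>b\<in>B. 1 + exp (- la * real b))"
proof -
  let ?C = "{S. S \<subseteq> B \<and> real (\<Sum>S) \<le> Bd}"
  have C: "?C \<subseteq> Pow B" by auto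
  have finC: "finite ?C" using fin by (auto intro: finite_subset[OF C])
  have "real (card ?C) = (\<Sum>S\<in>?C. 1)" by simp
  also have "\<dots> \<le> (\<Sum>S\<in>?C. exp (la * (Bd - real (\<Sum>S))))"
    by (rule sum_mono) (use la in auto)
  also have "\<dots> \<le> (\<Sum>S\<in>Pow B. exp (la * (Bd - real (\<Sum>S))))"
    by (rule sum_mono2) (use fin C in auto)
  also have "\<dots> = (\<Sum>S\<in>Pow B. exp (la * Bd) * (\<Prod>b\<in>S. exp (- la * real b)))"
  proof (rule sum.cong)
    fix S assume "S \<in> Pow B"
    then have fS: "finite S" using fin finite_subset by auto
    have e1: "(\<Sum>b\<in>S. - la * real b) = - (la * real (\<Sum>S))"
      by (simp add: sum_negf sum_distrib_left of_nat_sum)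
    have "exp (la * (Bd - real (\<Sum>S))) = exp (la * Bd + - (la * real (\<Sum>S)))"
      by (simp add: right_diff_distrib)
    also have "\<dots> = exp (la * Bd) * exp (\<Sum>b\<in>S. - la * real b)"
      unfolding exp_add e1 ..
    finally have "exp (la * (Bd - real (\<Sum>S))) = exp (la * Bd) * exp (\<Sum>b\<in>S. - la * real b)" .
    also have "\<dots> = exp (la * Bd) * (\<Prod>b\<in>S. exp (- la * real b))"
      using fS by (simp add: exp_sum)
    finally show "exp (la * (Bd - real (\<Sum>S))) = exp (la * Bd) * (\<Prod>b\<in>S. exp (- la * real b))" .
  qed simp
  also have "\<dots> = exp (la * Bd) * (\<Sum>S\<in>Pow B. (\<Prod>b\<in>S. exp (- la * real b)) * (\<Prod>b\<in>B - S. 1))"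
    by (simp add: sum_distrib_left)
  also have "\<dots> = exp (la * Bd) * (\<Prod>b\<in>B. exp (- la * real b) + 1)"
    using prod_add[OF fin, of "\<lambda>b. exp (- la * real b)" "\<lambda>_. 1"] by simp
  finally show ?thesis by (simp add: add.commute)
qed

lemma balance:
  fixes w :: "nat \<Rightarrow> real" and q :: nat
  assumes "finite B" "q > 0" "\<forall>b\<in>B. 0 \<le> w b \<and> w b \<le> W" "W \<ge> 0"
  shows "\<exists>g. (\<forall>b. g b < q) \<and> (\<forall>j<q. (\<Sum>b\<in>{b\<in>B. g b = j}. w b) \<le> (\<Sum>b\<in>B. w b) / real q + W)"
  using assms
proof (induction B rule: finite_induct)
  case empty
  then show ?case by (intro exI[of _ "\<lambda>_. 0"]) auto
next
  case (insert x F)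
  from insert obtain g where g: "\<forall>b. g b < q"
    and gl: "\<forall>j<q. (\<Sum>b\<in>{b\<in>F. g b = j}. w b) \<le> (\<Sum>b\<in>F. w b) / q + W" by auto
  let ?ld = "\<lambda>j. (\<Sum>b\<in>{b\<in>F. g b = j}. w b)"
  have tot: "(\<Sum>j<q. ?ld j) = (\<Sum>b\<in>F. w b)"
  proof -
    have "(\<Sum>j<q. ?ld j) = (\<Sum>j<q. \<Sum>b\<in>F. if g b = j then w b else 0)"
      by (rule sum.cong) (auto simp: sum.inter_filter[symmetric] insert.hyps)
    also have "\<dots> = (\<Sum>b\<in>F. \<Sum>j<q. if g b = j then w b else 0)" by (rule sum.swap)
    also have "\<dots> = (\<Sum>b\<in>F. w b)"
    proof (rule sum.cong)
      fix x assume "x \<in> F"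
      have "g x < q" using g by simp
      then show "(\<Sum>j<q. if g x = j then w x else 0) = w x" by (simp add: sum.If_cases)
    qed simp
    finally show ?thesis .
  qed
  have "\<exists>j0<q. ?ld j0 \<le> (\<Sum>b\<in>F. w b) / q"
  proof (rule ccontr)
    assume "\<not> ?thesis"
    then have "\<forall>j\<in>{..<q}. (\<Sum>b\<in>F. w b) / q < ?ld j" by auto
    then have "(\<Sum>j<q. (\<Sum>b\<in>F. w b) / q) < (\<Sum>j<q. ?ld j)"
      by (intro sum_strict_mono) (use insert.prems in auto)
    then show False using tot insert.prems by simp
  qed
  then obtain j0 where j0: "j0 < q" "?ld j0 \<le> (\<Sum>b\<in>F. w b) / q" by blast
  define g' where "g' = g(x := j0)"
  have wx: "0 \<le> w x" "w x \<le> W" using insert.prems by auto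
  have sumins: "(\<Sum>b\<in>insert x F. w b) = w x + (\<Sum>b\<in>F. w b)" using insert.hyps by simp
  have "\<forall>j<q. (\<Sum>b\<in>{b\<in>insert x F. g' b = j}. w b) \<le> (\<Sum>b\<in>insert x F. w b) / q + W"
  proof (intro allI impI)
    fix j assume jq: "j < q"
    show "(\<Sum>b\<in>{b\<in>insert x F. g' b = j}. w b) \<le> (\<Sum>b\<in>insert x F. w b) / q + W"
    proof (cases "j = j0")
      case True
      have "{b\<in>insert x F. g' b = j} = insert x {b\<in>F. g b = j}"
        using True insert.hyps by (auto simp: g'_def)
      then have "(\<Sum>b\<in>{b\<in>insert x F. g' b = j}. w b) = w x + ?ld j"
        using insert.hyps by simp
      also have "\<dots> \<le> W + (\<Sum>b\<in>F. w b) / q" using j0 True wx by simp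
      also have "\<dots> \<le> (\<Sum>b\<in>insert x F. w b) / q + W"
        using sumins wx insert.prems by (simp add: divide_right_mono add_divide_distrib)
      finally show ?thesis .
    next
      case False
      have "{b\<in>insert x F. g' b = j} = {b\<in>F. g b = j}"
        using False insert.hyps by (auto simp: g'_def)
      then have "(\<Sum>b\<in>{b\<in>insert x F. g' b = j}. w b) = ?ld j" by simp
      also have "\<dots> \<le> (\<Sum>b\<in>F. w b) / q + W" using gl jq by auto
      also have "\<dots> \<le> (\<Sum>b\<in>insert x F. w b) / q + W"
        using sumins wx insert.prems by (simp add: divide_right_mono add_divide_distrib)
      finally show ?thesis .
    qed
  qed
  moreover have "\<forall>b. g' b < q" using g j0 by (simp add: g'_def)
  ultimately show ?case by blast
qed



lemma half_sum:
  assumes "finite U"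
  shows "(\<Sum>i\<in>U. (1/2::real)^i) \<le> 2"
  using geometric_sum_less[of "1/2::real" U] assms by simp

lemma geomA:
  fixes y :: real
  assumes "finite S" "y > 0"
  shows "(\<Sum>L\<in>{L\<in>S. y < 2^L}. 1 / 2^L) \<le> 2 / y"
proof (cases "{L\<in>S. y < 2^L} = {}")
  case True then show ?thesis using assms by (subst True) simp
next
  case False
  let ?T = "{L\<in>S. y < 2^L}"
  have fT: "finite ?T" using assms by simp
  define L0 where "L0 = Min ?T"
  have L0T: "L0 \<in> ?T" using Min_in[OF fT False] L0_def by simp
  have L0le: "\<And>L. L \<in> ?T \<Longrightarrow> L0 \<le> L" using L0_def fT by simp
  have "(\<Sum>L\<in>?T. 1 / (2::real)^L) = (\<Sum>L\<in>?T. (1/2)^L0 * (1/2)^(L - L0))"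
  proof (rule sum.cong)
    fix L assume "L \<in> ?T"
    then have "L = L0 + (L - L0)" using L0le by simp
    then have "(1/2::real)^L = (1/2)^L0 * (1/2)^(L - L0)" by (metis power_add)
    then show "1 / (2::real)^L = (1/2)^L0 * (1/2)^(L - L0)" by (simp add: power_divide)
  qed simp
  also have "\<dots> = (1/2)^L0 * (\<Sum>L\<in>?T. (1/2::real)^(L - L0))" by (simp add: sum_distrib_left)
  also have "(\<Sum>L\<in>?T. (1/2::real)^(L - L0)) = (\<Sum>i\<in>(\<lambda>L. L - L0) ` ?T. (1/2::real)^i)"
  proof (rule sum.reindex[symmetric, unfolded comp_def])
    show "inj_on (\<lambda>L. L - L0) ?T"
    proof (rule inj_onI)
      fix x z assume xz: "x \<in> ?T" "z \<in> ?T" "x - L0 = z - L0"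
      have "L0 \<le> x" "L0 \<le> z" using L0le xz(1,2) by auto
      then show "x = z" using xz(3) by arith
    qed
  qed
  also have "\<dots> \<le> 2" by (rule half_sum) (use fT in simp)
  finally have "(\<Sum>L\<in>?T. 1 / (2::real)^L) \<le> (1/2)^L0 * 2"
    by (simp add: mult_left_mono)
  also have "\<dots> \<le> 2 / y"
  proof -
    have "y < 2^L0" using L0T by simp
    then have "1 / (2::real)^L0 \<le> 1 / y" using assms by (simp add: frac_le)
    then show ?thesis by (simp add: power_divide)
  qed
  finally show ?thesis .
qed

lemma geomB:
  fixes y :: real
  assumes "finite S" "y \<ge> 0"
  shows "(\<Sum>L\<in>{L\<in>S. 2^L \<le> y}. (2::real)^L) \<le> 2 * y"
proof (cases "{L\<in>S. 2^L \<le> y} = {}")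
  case True
  then show ?thesis using assms by (subst True) simp
next
  case False
  let ?T = "{L\<in>S. 2^L \<le> y}"
  have fT: "finite ?T" using assms by simp
  define N where "N = Max ?T"
  have NT: "N \<in> ?T" using Max_in[OF fT False] N_def by simp
  have leN: "\<And>L. L \<in> ?T \<Longrightarrow> L \<le> N" using N_def fT by simp
  have "(\<Sum>L\<in>?T. (2::real)^L) \<le> (\<Sum>L<Suc N. (2::real)^L)"
    by (rule sum_mono2) (use leN in \<open>auto simp: less_Suc_eq_le\<close>)
  also have "\<dots> = 2 * 2^N - 1" using geometric_sum[of "2::real" "Suc N"] by simp
  also have "\<dots> \<le> 2 * y" using NT by simp
  finally show ?thesis .
qed

lemma card_window5:
  fixes x :: real
  shows "card {L\<in>S. x < 32 * 2^L \<and> 2^L \<le> x} \<le> 5"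
proof (cases "{L\<in>S. x < 32 * 2^L \<and> 2^L \<le> x} = {}")
  case True then show ?thesis by (subst True) simp
next
  case False
  let ?T = "{L\<in>S. x < 32 * 2^L \<and> 2^L \<le> x}"
  obtain L1 where L1: "L1 \<in> ?T" using False by blast
  have bdd: "?T \<subseteq> {..L1 + 5}"
  proof
    fix L assume "L \<in> ?T"
    then have "(2::real)^L \<le> x" by simp
    also have "x < 32 * 2^L1" using L1 by simp
    also have "\<dots> = 2^(L1 + 5)" by (simp add: power_add)
    finally have "(2::real)^L < 2^(L1+5)" .
    then show "L \<in> {..L1 + 5}" by simp
  qed
  then have fT: "finite ?T" using finite_subset by blast
  define L0 where "L0 = Min ?T"
  have L0T: "L0 \<in> ?T" using Min_in[OF fT False] L0_def by simp
  have sub: "?T \<subseteq> {L0..<L0+5}"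
  proof
    fix L assume LT: "L \<in> ?T"
    have "L0 \<le> L" using L0_def fT LT by simp
    moreover have "(2::real)^L \<le> x" using LT by simp
    moreover have "x < 32 * 2^L0" using L0T by simp
    ultimately have "(2::real)^L < 2^(L0+5)" by (simp add: power_add)
    then have "L < L0 + 5" by simp
    with \<open>L0 \<le> L\<close> show "L \<in> {L0..<L0+5}" by simp
  qed
  have "card ?T \<le> card {L0..<L0+5}" by (rule card_mono) (use sub in auto)
  then show ?thesis by simp
qed

lemma avg_exists:
  fixes f :: "nat \<Rightarrow> real"
  assumes "finite W" "(\<Sum>x\<in>W. f x) < real (card W)"
  shows "\<exists>x\<in>W. f x < 1"
proof (rule ccontr)
  assume "\<not> ?thesis"
  then have "\<forall>x\<in>W. 1 \<le> f x" by auto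
  then have "(\<Sum>x\<in>W. 1) \<le> (\<Sum>x\<in>W. f x)" by (intro sum_mono) auto
  then show False using assms by simp
qed

lemma exp_le_pow2:
  fixes K :: nat and x :: real
  assumes "x \<le> 3/5 * K"
  shows "exp x \<le> 2 ^ K"
proof -
  have "exp x \<le> exp (real K * (3/5))" using assms by (simp add: mult.commute)
  also have "\<dots> = exp (3/5) ^ K" by (rule exp_of_nat_mult)
  also have "\<dots> \<le> 2 ^ K"
  proof (rule power_mono)
    show "exp (3/5::real) \<le> 2" using exp_bound[of "3/5"] by (simp add: power2_eq_square)
  qed simp
  finally show ?thesis .
qed

lemma one_plus_exp_le:
  fixes x :: real
  assumes "x \<ge> 0"
  shows "1 + exp (-x) \<le> exp (1 / (1 + x))"
proof -
  have "1 + x \<le> exp x" by simp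
  then have "exp (-x) \<le> 1 / (1 + x)" using assms
    by (simp add: exp_minus divide_simps)
  then have "1 + exp (-x) \<le> 1 + 1 / (1 + x)" by simp
  also have "\<dots> \<le> exp (1 / (1 + x))" by (rule exp_ge_add_one_self)
  finally show ?thesis .
qed



lemma elemO:
  fixes D a :: nat
  assumes "a \<ge> 1" "D \<ge> 1" "finite W"
  shows "(\<Sum>L\<in>W. if 32 * real D * real a < 2^L then real a / 2^L else 0) \<le> 1 / (16 * real D)"
proof -
  have "(\<Sum>L\<in>W. if 32 * real D * real a < 2^L then real a / 2^L else 0)
      = (\<Sum>L\<in>{L\<in>W. 32 * real D * real a < 2^L}. real a / 2^L)"
    using assms by (simp add: sum.inter_filter)
  also have "\<dots> = real a * (\<Sum>L\<in>{L\<in>W. 32 * real D * real a < 2^L}. 1 / 2^L)"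
    by (simp add: sum_distrib_left)
  also have "\<dots> \<le> real a * (2 / (32 * real D * real a))"
    by (rule mult_left_mono[OF geomA]) (use assms in auto)
  also have "\<dots> = 1 / (16 * real D)" using assms by (simp add: field_simps)
  finally show ?thesis .
qed

lemma elemG:
  fixes D a :: nat
  assumes "a \<ge> 1" "D \<ge> 1" "finite W"
  shows "(\<Sum>L\<in>W. if 2^L \<le> 32 * real D * real a \<and> real a \<le> 2^L then 1 / (1 + real D * real a / 2^L) else 0) \<le> 7"
proof -
  define S where "S = {L\<in>W. 2^L \<le> 32 * real D * real a \<and> real a \<le> 2^L}"
  define S1 where "S1 = {L\<in>S. 2^L \<le> real D * real a}"
  define S2 where "S2 = {L\<in>S. \<not> 2^L \<le> real D * real a}"
  let ?f = "\<lambda>L. 1 / (1 + real D * real a / 2^L)"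
  have fS: "finite S" using assms by (simp add: S_def)
  have fS1: "finite S1" "finite S2" using fS by (auto simp: S1_def S2_def)
  have Da: "real D * real a > 0" using assms by simp
  have "(\<Sum>L\<in>W. if 2^L \<le> 32 * real D * real a \<and> real a \<le> 2^L then ?f L else 0) = (\<Sum>L\<in>S. ?f L)"
    using assms by (simp add: sum.inter_filter S_def)
  also have "\<dots> = (\<Sum>L\<in>S1. ?f L) + (\<Sum>L\<in>S2. ?f L)"
  proof -
    have eq: "S = S1 \<union> S2" by (auto simp: S1_def S2_def)
    show ?thesis unfolding eq by (rule sum.union_disjoint) (use fS1 in \<open>auto simp: S1_def S2_def\<close>)
  qed
  also have "(\<Sum>L\<in>S1. ?f L) \<le> (\<Sum>L\<in>S1. 2^L / (real D * real a))"
  proof (rule sum_mono)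
    fix L assume "L \<in> S1"
    have "real D * real a / 2^L > 0" using Da by simp
    then have "1 / (1 + real D * real a / 2^L) \<le> 1 / (real D * real a / 2^L)"
      by (intro frac_le) auto
    then show "?f L \<le> 2^L / (real D * real a)" by simp
  qed
  also have "\<dots> = (\<Sum>L\<in>S1. 2^L) / (real D * real a)"
    by (simp add: sum_divide_distrib)
  also have "\<dots> \<le> (2 * (real D * real a)) / (real D * real a)"
    unfolding S1_def by (rule divide_right_mono[OF geomB]) (use fS Da assms in auto)
  also have "\<dots> = 2" using Da by (simp only: nonzero_mult_div_cancel_right less_irrefl)
  also have "(\<Sum>L\<in>S2. ?f L) \<le> (\<Sum>L\<in>S2. 1)"
  proof (rule sum_mono)
    fix L assume "L \<in> S2"
    have y: "0 \<le> real D * real a / 2^L" by simp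
    have "1 / (1 + real D * real a / 2^L) \<le> 1 / 1"
      by (rule divide_left_mono) (use y in \<open>simp_all add: add_pos_nonneg\<close>)
    then show "?f L \<le> 1" by simp
  qed
  also have "\<dots> = real (card S2)" by simp
  also have "\<dots> \<le> 5"
  proof -
    have "S2 \<subseteq> {L\<in>W. 32 * real D * real a < 32 * 2^L \<and> 2^L \<le> 32 * real D * real a}"
      by (auto simp: S2_def S_def)
    then have "card S2 \<le> card {L\<in>W. 32 * real D * real a < 32 * 2^L \<and> 2^L \<le> 32 * real D * real a}"
      by (intro card_mono) (use assms in auto)
    also have "\<dots> \<le> 5" by (rule card_window5)
    finally show ?thesis by simp
  qed
  finally show ?thesis by simp
qed



lemma stage_params:
  fixes r :: nat and A :: "nat set" and N0 Lp :: nat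
  assumes r2: "r \<ge> 2" and pos: "\<forall>a\<in>A. a > 0"
    and cnt: "\<forall>n\<ge>N0. real (count_upto A n) \<le> (real r - 1) / 140 * (log 2 (real n))^2"
    and p_def: "p = (r + 3) div 5" and q_def: "q = r - p"
    and D_def: "D = (2::nat) ^ (r + 2 * Lp + N0 + 4)"
  shows "\<exists>L\<in>{8*D..<16*D}.
    (\<Sum>a\<in>{a\<in>A. 1 \<le> a \<and> a \<le> 2^(16*D)}. if 32 * real D * real a < 2^L then real a / 2^L else 0) < 2 * real p / 5 \<and>
    (\<Sum>a\<in>{a\<in>A. 1 \<le> a \<and> a \<le> 2^(16*D)}. if 2^L \<le> 32 * real D * real a \<and> real a \<le> 2^L then 1 / (1 + real D * real a / 2^L) else 0) < 2 * real q * (8 * real D) / 5"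
proof -
  define M where "M = 8 * D"
  define W where "W = {M..<2*M}"
  define AM where "AM = {a\<in>A. 1 \<le> a \<and> a \<le> 2^(16*D)}"
  define Of where "Of L = (\<Sum>a\<in>AM. if 32 * real D * real a < 2^L then real a / 2^L else 0)" for L :: nat
  define Gf where "Gf L = (\<Sum>a\<in>AM. if 2^L \<le> 32 * real D * real a \<and> real a \<le> 2^L then 1 / (1 + real D * real a / 2^L) else 0)" for L :: nat
  have p1: "p \<ge> 1" using r2 p_def by simp
  have rp: "real r - 1 \<le> 5 * real p"
  proof -
    have "r - 1 \<le> 5 * p" using p_def r2 by simp
    then show ?thesis using r2 by linarith
  qed
  have p5: "5 * p \<le> r + 3" using p_def by simp
  have q1: "q \<ge> 1" using p5 r2 q_def by simp
  have rq: "4 * (real r - 1) \<le> 5 * real q"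
  proof -
    have "4 * (r - 1) \<le> 5 * q" using p5 r2 q_def by simp
    then show ?thesis using r2 by (simp add: of_nat_diff)
  qed
  have D1: "D \<ge> 1" using D_def by simp
  have DN0: "N0 \<le> D"
  proof -
    have "r + 2 * Lp + N0 + 4 < 2 ^ (r + 2 * Lp + N0 + 4)" by (rule less_exp)
    then show ?thesis unfolding D_def by linarith
  qed
  have finAM: "finite AM" unfolding AM_def by (rule finite_subset[of _ "{..2^(16*D)}"]) auto
  have AMpos: "\<And>a. a \<in> AM \<Longrightarrow> a \<ge> 1" by (auto simp: AM_def)
  have cardAM: "real (card AM) \<le> (real r - 1) / 140 * (16 * real D)^2"
  proof -
    have "N0 \<le> 2^(16*D)"
    proof -
      have "16 * D < 2^(16*D)" by (rule less_exp)
      then show ?thesis using DN0 by linarith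
    qed
    then have "real (count_upto A (2^(16*D))) \<le> (real r - 1) / 140 * (log 2 (real (2^(16*D))))^2"
      using cnt by blast
    moreover have "count_upto A (2^(16*D)) = card AM"
      unfolding count_upto_def AM_def by (rule arg_cong[where f=card]) auto
    moreover have "log 2 (real (2^(16*D))) = 16 * real D" by simp
    ultimately show ?thesis by simp
  qed
  have finW: "finite W" by (simp add: W_def)
  have cardW: "card W = M" by (simp add: W_def)
  have sumO: "(\<Sum>L\<in>W. Of L) \<le> real (card AM) / (16 * real D)"
  proof -
    have "(\<Sum>L\<in>W. Of L) = (\<Sum>a\<in>AM. \<Sum>L\<in>W. if 32 * real D * real a < 2^L then real a / 2^L else 0)"
      unfolding Of_def by (rule sum.swap)
    also have "\<dots> \<le> (\<Sum>a\<in>AM. 1 / (16 * real D))"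
      by (rule sum_mono) (rule elemO, use AMpos D1 finW in auto)
    also have "\<dots> = real (card AM) / (16 * real D)" by simp
    finally show ?thesis .
  qed
  have sumG: "(\<Sum>L\<in>W. Gf L) \<le> 7 * real (card AM)"
  proof -
    have "(\<Sum>L\<in>W. Gf L) = (\<Sum>a\<in>AM. \<Sum>L\<in>W. if 2^L \<le> 32 * real D * real a \<and> real a \<le> 2^L then 1 / (1 + real D * real a / 2^L) else 0)"
      unfolding Gf_def by (rule sum.swap)
    also have "\<dots> \<le> (\<Sum>a\<in>AM. 7)"
      by (rule sum_mono) (rule elemG, use AMpos D1 finW in auto)
    also have "\<dots> = 7 * real (card AM)" by simp
    finally show ?thesis .
  qed
  define Phi where "Phi L = Of L / (2 * real p / 5) + Gf L / (2 * real q * real M / 5)" for L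
  have Dpos: "real D > 0" using D1 by simp
  have "(\<Sum>L\<in>W. Phi L) < real (card W)"
  proof -
    have "(\<Sum>L\<in>W. Phi L) = (\<Sum>L\<in>W. Of L) / (2 * real p / 5) + (\<Sum>L\<in>W. Gf L) / (2 * real q * real M / 5)"
      unfolding Phi_def by (simp only: sum.distrib sum_divide_distrib)
    also have "\<dots> \<le> (real (card AM) / (16 * real D)) / (2 * real p / 5) + (7 * real (card AM)) / (2 * real q * real M / 5)"
      by (intro add_mono divide_right_mono sumO sumG) (use p1 q1 in auto)
    also have "\<dots> = real (card AM) * (5 / (32 * real D * real p) + 35 / (16 * real D * real q))"
      using p1 q1 Dpos by (simp add: M_def field_simps)
    also have "\<dots> \<le> ((real r - 1) / 140 * (16 * real D)^2) * (5 / (32 * real D * real p) + 35 / (16 * real D * real q))"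
      by (rule mult_right_mono[OF cardAM]) (use p1 q1 Dpos in auto)
    also have "\<dots> = real D * (2 * (real r - 1) / (7 * real p) + 4 * (real r - 1) / real q)"
      using p1 q1 Dpos by (simp add: field_simps power2_eq_square)
    also have "\<dots> \<le> real D * (10 / 7 + 5)"
    proof -
      have "2 * (real r - 1) / (7 * real p) \<le> 10 / 7" using rp p1 by (simp add: field_simps)
      moreover have "4 * (real r - 1) / real q \<le> 5" using rq q1 by (simp add: field_simps)
      ultimately have "2 * (real r - 1) / (7 * real p) + 4 * (real r - 1) / real q \<le> 10 / 7 + 5"
        by (rule add_mono)
      then show ?thesis by (rule mult_left_mono) (use Dpos in simp)
    qed
    also have "\<dots> < real (card W)" using Dpos cardW by (simp add: M_def)
    finally show ?thesis .
  qed
  then obtain L where LW: "L \<in> W" and PhiL: "Phi L < 1" using avg_exists[OF finW] by blast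
  have Of0: "Of L \<ge> 0" unfolding Of_def by (intro sum_nonneg) auto
  have Gf0: "Gf L \<ge> 0" unfolding Gf_def by (intro sum_nonneg) (auto simp: add_pos_nonneg)
  have pp: "2 * real p / 5 > 0" "2 * real q * real M / 5 > 0" using p1 q1 Dpos by (auto simp: M_def)
  have "Of L / (2 * real p / 5) < 1"
    using PhiL Gf0 pp unfolding Phi_def by (smt (verit) divide_nonneg_pos)
  then have "Of L < 2 * real p / 5" using pp by (simp add: divide_less_eq)
  moreover have "Gf L / (2 * real q * real M / 5) < 1"
    using PhiL Of0 pp unfolding Phi_def by (smt (verit) divide_nonneg_pos)
  then have "Gf L < 2 * real q * real M / 5" using pp by (simp add: divide_less_eq)
  ultimately show ?thesis using LW unfolding W_def M_def Of_def Gf_def AM_def by auto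
qed



lemma sum_old_bound:
  fixes F :: "nat set" and Lp :: nat
  assumes "finite F" "\<forall>a\<in>F. 0 < a \<and> a \<le> 2^Lp"
  shows "\<Sum>F \<le> 4^Lp"
proof -
  have "F \<subseteq> {1..2^Lp}" using assms by auto
  then have cF: "card F \<le> 2^Lp" using card_mono[of "{1..2^Lp}" F] by simp
  have "\<Sum>F \<le> card F * 2^Lp" using sum_bounded_above[of F "\<lambda>x. x" "2^Lp"] assms by auto
  also have "\<dots> \<le> 2^Lp * 2^Lp" using cF by simp
  also have "\<dots> = 4^Lp" by (simp add: power_mult_distrib[symmetric])
  finally show ?thesis .
qed

lemma stage:
  fixes r :: nat and A :: "nat set" and N0 Lp :: nat
  assumes r2: "r \<ge> 2" and pos: "\<forall>a\<in>A. a > 0"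
    and cnt: "\<forall>n\<ge>N0. real (count_upto A n) \<le> (real r - 1) / 140 * (log 2 (real n))^2"
  shows "\<exists>L g n. Lp < L \<and> 2^Lp < n \<and> n \<le> 2^L \<and> (\<forall>a. g a < r) \<and>
     (\<forall>col. (\<forall>a\<in>A. 2^Lp < a \<and> a \<le> 2^L \<longrightarrow> col a = g a) \<longrightarrow> (\<forall>i. n \<notin> subsums {a\<in>A. col a = i}))"
proof -
  define p where "p = (r + 3) div 5"
  define q where "q = r - p"
  define D where "D = (2::nat) ^ (r + 2 * Lp + N0 + 4)"
  obtain L where LW: "L \<in> {8*D..<16*D}"
    and OfL: "(\<Sum>a\<in>{a\<in>A. 1 \<le> a \<and> a \<le> 2^(16*D)}. if 32 * real D * real a < 2^L then real a / 2^L else 0) < 2 * real p / 5"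
    and GfL: "(\<Sum>a\<in>{a\<in>A. 1 \<le> a \<and> a \<le> 2^(16*D)}. if 2^L \<le> 32 * real D * real a \<and> real a \<le> 2^L then 1 / (1 + real D * real a / 2^L) else 0) < 2 * real q * (8 * real D) / 5"
    using stage_params[OF r2 pos cnt p_def q_def D_def] by blast
  have p1: "p \<ge> 1" using r2 p_def by simp
  have p5: "5 * p \<le> r + 3" using p_def by simp
  have q1: "q \<ge> 1" using p5 r2 q_def by simp
  have pq: "p + q = r" using p5 r2 q_def by simp
  have Dbig: "r + 2 * Lp + 4 < D"
  proof -
    have "r + 2 * Lp + N0 + 4 < 2 ^ (r + 2 * Lp + N0 + 4)" by (rule less_exp)
    then show ?thesis unfolding D_def by linarith
  qed
  have D1: "D \<ge> 1" using Dbig by simp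
  have L8: "8 * D \<le> L" and L16: "L < 16 * D" using LW by auto
  have LLp: "2 * Lp + 4 \<le> L" using Dbig L8 by linarith
  define H :: nat where "H = 2^(L-1)"
  have H2: "2^L = 2 * H" unfolding H_def using LLp by (cases L) auto
  have Hpos: "real H > 0" by (simp add: H_def)
  define s :: nat where "s = 4^Lp"
  define RO where "RO = {a\<in>A. 2^Lp < a \<and> 32 * real D * real a < 2^L}"
  define RG where "RG = {a\<in>A. 2^Lp < a \<and> 2^L \<le> 32 * real D * real a \<and> real a \<le> 2^L}"
  have finRO: "finite RO"
  proof (rule finite_subset[of _ "{..2^L}"])
    show "RO \<subseteq> {..2^L}"
    proof
      fix a assume "a \<in> RO"
      then have "32 * real D * real a < 2^L" by (simp add: RO_def)
      moreover have "1 * real a \<le> (32 * real D) * real a"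
        by (rule mult_right_mono) (use D1 in simp_all)
      ultimately have "real a \<le> 2^L" by linarith
      then show "a \<in> {..2^L}" by (simp del: of_nat_power add: of_nat_power[symmetric])
    qed
  qed simp
  have finRG: "finite RG"
  proof (rule finite_subset[of _ "{..2^L}"])
    show "RG \<subseteq> {..2^L}"
      by (auto simp: RG_def simp del: of_nat_power simp add: of_nat_power[symmetric])
  qed simp
  obtain go where go_lt: "\<forall>b. go b < p"
    and go_ld: "\<forall>j<p. (\<Sum>b\<in>{b\<in>RO. go b = j}. real b) \<le> (\<Sum>b\<in>RO. real b) / real p + 2^L / (32 * real D)"
  proof -
    have "\<forall>b\<in>RO. 0 \<le> real b \<and> real b \<le> 2^L / (32 * real D)"
      using D1 by (auto simp: RO_def field_simps)
    then show ?thesis using balance[OF finRO, of p "\<lambda>b. real b" "2^L / (32 * real D)"] p1 that by auto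
  qed
  define w where "w b = 1 / (1 + real D * real b / 2^L)" for b :: nat
  have w01: "0 \<le> w b \<and> w b \<le> 1" for b
  proof -
    have y: "0 \<le> real D * real b / 2^L" by simp
    have "1 / (1 + real D * real b / 2^L) \<le> 1 / 1"
      by (rule divide_left_mono) (use y in \<open>simp_all add: add_pos_nonneg\<close>)
    then have le: "w b \<le> 1" unfolding w_def by (simp only: div_by_1)
    have "0 \<le> w b" unfolding w_def by (intro divide_nonneg_nonneg) (use y in linarith)+
    with le show ?thesis by simp
  qed
  obtain gg where gg_lt: "\<forall>b. gg b < q"
    and gg_ld: "\<forall>j<q. (\<Sum>b\<in>{b\<in>RG. gg b = j}. w b) \<le> (\<Sum>b\<in>RG. w b) / real q + 1"
    using balance[OF finRG, of q w 1] q1 w01 by auto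
  define g where "g a = (if a \<in> RO then go a else if a \<in> RG then p + gg a else 0)" for a
  have g_lt: "\<forall>a. g a < r"
  proof
    fix a
    have "go a < p" "gg a < q" using go_lt gg_lt by auto
    then show "g a < r" using pq p1 by (simp add: g_def)
  qed
  define AM where "AM = {a\<in>A. 1 \<le> a \<and> a \<le> 2^(16*D)}"
  have finAM: "finite AM" unfolding AM_def by (rule finite_subset[of _ "{..2^(16*D)}"]) auto
  have L2AM: "(2::real)^L \<le> 2^(16*D)" using L16 by simp
  have ROAM: "RO \<subseteq> AM"
  proof
    fix a assume aR: "a \<in> RO"
    then have a1: "32 * real D * real a < 2^L" by (simp add: RO_def)
    have "1 * real a \<le> (32 * real D) * real a"
      by (rule mult_right_mono) (use D1 in simp_all)
    then have "real a \<le> 2^L" using a1 by linarith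
    then have "real a \<le> 2^(16*D)" using L2AM by linarith
    then have "a \<le> 2^(16*D)" by (simp del: of_nat_power add: of_nat_power[symmetric])
    then show "a \<in> AM" using aR pos by (auto simp: RO_def AM_def Suc_le_eq)
  qed
  have RGAM: "RG \<subseteq> AM"
  proof
    fix a assume aR: "a \<in> RG"
    then have "real a \<le> 2^L" by (simp add: RG_def)
    then have "real a \<le> 2^(16*D)" using L2AM by linarith
    then have "a \<le> 2^(16*D)" by (simp del: of_nat_power add: of_nat_power[symmetric])
    then show "a \<in> AM" using aR pos by (auto simp: RG_def AM_def Suc_le_eq)
  qed
  have ROsum: "(\<Sum>b\<in>RO. real b) \<le> 2^L * (\<Sum>a\<in>AM. if 32 * real D * real a < 2^L then real a / 2^L else 0)"
  proof -
    have "(\<Sum>b\<in>RO. real b) = 2^L * (\<Sum>b\<in>RO. real b / 2^L)"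
      by (simp add: sum_distrib_left)
    also have "(\<Sum>b\<in>RO. real b / 2^L) = (\<Sum>a\<in>RO. if 32 * real D * real a < 2^L then real a / 2^L else 0)"
      by (rule sum.cong) (auto simp: RO_def)
    also have "\<dots> \<le> (\<Sum>a\<in>AM. if 32 * real D * real a < 2^L then real a / 2^L else 0)"
      by (rule sum_mono2[OF finAM ROAM]) auto
    finally show ?thesis by simp
  qed
  have RGsum: "(\<Sum>b\<in>RG. w b) \<le> (\<Sum>a\<in>AM. if 2^L \<le> 32 * real D * real a \<and> real a \<le> 2^L then 1 / (1 + real D * real a / 2^L) else 0)"
  proof -
    have "(\<Sum>b\<in>RG. w b) = (\<Sum>a\<in>RG. if 2^L \<le> 32 * real D * real a \<and> real a \<le> 2^L then 1 / (1 + real D * real a / 2^L) else 0)"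
      by (rule sum.cong) (auto simp: RG_def w_def)
    also have "\<dots> \<le> (\<Sum>a\<in>AM. if 2^L \<le> 32 * real D * real a \<and> real a \<le> 2^L then 1 / (1 + real D * real a / 2^L) else 0)"
      by (rule sum_mono2[OF finAM RGAM]) (use w01 in \<open>auto simp: w_def\<close>)
    finally show ?thesis .
  qed
  have Hreal: "(2::real)^L = 2 * real H" using H2 by (metis of_nat_numeral of_nat_mult of_nat_power)
  have s16: "16 * real s \<le> 2^L"
  proof -
    have "16 * s = 2^(2*Lp+4)" by (simp add: s_def power_add power_mult)
    also have "\<dots> \<le> 2^L" using LLp by (intro power_increasing) auto
    finally have "16 * s \<le> 2^L" .
    then have "real (16 * s) \<le> real (2^L)" by (simp only: of_nat_le_iff)
    then show ?thesis by simp
  qed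
  have owner_small: "(\<Sum>b\<in>{b\<in>RO. go b = j}. real b) + real s < real H" if "j < p" for j
  proof -
    have "(\<Sum>b\<in>{b\<in>RO. go b = j}. real b) \<le> (\<Sum>b\<in>RO. real b) / real p + 2^L / (32 * real D)"
      using go_ld that by blast
    also have "(\<Sum>b\<in>RO. real b) / real p \<le> 2^L * (2 * real p / 5) / real p"
    proof (rule divide_right_mono)
      have "2^L * (\<Sum>a\<in>{a\<in>A. 1 \<le> a \<and> a \<le> 2^(16*D)}. if 32 * real D * real a < 2^L then real a / 2^L else 0) \<le> 2^L * (2 * real p / 5)"
        using OfL by (intro mult_left_mono) auto
      then show "(\<Sum>b\<in>RO. real b) \<le> 2^L * (2 * real p / 5)" using ROsum[unfolded AM_def] by linarith
    qed simp
    also have "\<dots> = 2^L * 2 / 5" using p1 by simp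
    also have "2^L / (32 * real D) \<le> 2^L / 32"
      using D1 by (intro divide_left_mono) auto
    finally have "(\<Sum>b\<in>{b\<in>RO. go b = j}. real b) \<le> 2^L * 2 / 5 + 2^L / 32" by simp
    then show ?thesis using s16 Hreal Hpos by linarith
  qed
  define B where "B j = {b\<in>RG. gg b = j}" for j
  define NS where "NS j = {S. S \<subseteq> B j \<and> real (\<Sum>S) \<le> 2^L}" for j
  have finB: "finite (B j)" for j using finRG by (simp add: B_def)
  have finNS: "finite (NS j)" for j
    by (rule finite_subset[of _ "Pow (B j)"]) (use finB in \<open>auto simp: NS_def\<close>)
  have NSb: "card (NS j) \<le> 2^(7*D+2)" if jq: "j < q" for j
  proof -
    have la: "real D / 2^L \<ge> 0" by simp
    have "real (card (NS j)) \<le> exp (real D / 2^L * 2^L) * (\<Prod>b\<in>B j. 1 + exp (- (real D / 2^L) * real b))"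
      unfolding NS_def by (rule card_small_subsets[OF finB la])
    also have "real D / 2^L * 2^L = real D" by simp
    also have "(\<Prod>b\<in>B j. 1 + exp (- (real D / 2^L) * real b)) \<le> (\<Prod>b\<in>B j. exp (w b))"
    proof (rule prod_mono)
      fix b assume "b \<in> B j"
      have x0: "0 \<le> real D * real b / 2^L" by simp
      have "- (real D / 2^L) * real b = - (real D * real b / 2^L)" by simp
      then have "1 + exp (- (real D / 2^L) * real b) \<le> exp (1 / (1 + real D * real b / 2^L))"
        using one_plus_exp_le[OF x0] by simp
      then show "0 \<le> 1 + exp (- (real D / 2^L) * real b) \<and> 1 + exp (- (real D / 2^L) * real b) \<le> exp (w b)"
        by (simp add: w_def add_nonneg_nonneg)
    qed
    also have "(\<Prod>b\<in>B j. exp (w b)) = exp (\<Sum>b\<in>B j. w b)" by (simp add: exp_sum[OF finB])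
    finally have c1: "real (card (NS j)) \<le> exp (real D) * exp (\<Sum>b\<in>B j. w b)" by simp
    have c3: "(\<Sum>b\<in>B j. w b) \<le> (\<Sum>b\<in>RG. w b) / real q + 1" using gg_ld jq by (simp add: B_def)
    have "(\<Sum>b\<in>RG. w b) / real q \<le> (2 * real q * (8 * real D) / 5) / real q"
      by (rule divide_right_mono) (use RGsum[unfolded AM_def] GfL in linarith, simp)
    also have "\<dots> = 16 * real D / 5" using q1 by simp
    finally have c2: "(\<Sum>b\<in>B j. w b) \<le> 16 * real D / 5 + 1" using c3 by linarith
    have "exp (real D) * exp (\<Sum>b\<in>B j. w b) = exp (real D + (\<Sum>b\<in>B j. w b))" by (simp add: exp_add)
    also have "\<dots> \<le> 2 ^ (7*D+2)"
      by (rule exp_le_pow2) (use c2 in simp)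
    finally have "real (card (NS j)) \<le> 2 ^ (7*D+2)" using c1 by linarith
    then have "real (card (NS j)) \<le> real ((2::nat) ^ (7*D+2))" by simp
    then show ?thesis by (simp only: of_nat_le_iff)
  qed
  define Bad where "Bad j = (\<lambda>(S,x). \<Sum>S + x) ` (NS j \<times> {..s})" for j
  define UB where "UB = (\<Union>j<q. Bad j)"
  have cardBad: "card (Bad j) \<le> card (NS j) * (s+1)" for j
  proof -
    have "card (Bad j) \<le> card (NS j \<times> {..s})" unfolding Bad_def by (rule card_image_le) (use finNS in simp)
    also have "\<dots> = card (NS j) * (s+1)" by (simp add: card_cartesian_product)
    finally show ?thesis .
  qed
  have finUB: "finite UB" unfolding UB_def Bad_def using finNS by auto
  have cardUB: "card UB < H"
  proof -
    have "card UB \<le> (\<Sum>j<q. card (Bad j))" unfolding UB_def by (rule card_UN_le) simp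
    also have "\<dots> \<le> (\<Sum>j<q. 2^(7*D+2) * (s+1))"
    proof (rule sum_mono)
      fix j assume "j \<in> {..<q}"
      then have "card (NS j) \<le> 2^(7*D+2)" using NSb by simp
      then have "card (NS j) * (s+1) \<le> 2^(7*D+2) * (s+1)" by (rule mult_right_mono) simp
      then show "card (Bad j) \<le> 2^(7*D+2) * (s+1)" using cardBad[of j] by linarith
    qed
    also have "\<dots> = q * 2^(7*D+2) * (s+1)" by (simp add: algebra_simps)
    also have "\<dots> < 2^q * 2^(7*D+2) * 2^(2*Lp+1)"
    proof -
      have "q < 2^q" by (rule less_exp)
      moreover have "s + 1 \<le> 2^(2*Lp+1)"
      proof -
        have "s = 2^(2*Lp)" by (simp add: s_def power_mult)
        moreover have "(1::nat) \<le> 2^(2*Lp)" by simp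
        ultimately show ?thesis by simp
      qed
      ultimately show ?thesis by (intro mult_less_le_imp_less mult_strict_right_mono) auto
    qed
    also have "\<dots> = 2^(q + (7*D+2) + (2*Lp+1))" by (simp add: power_add)
    also have "\<dots> \<le> 2^(L-1)"
    proof (rule power_increasing)
      have "q \<le> r" using pq by simp
      then show "q + (7*D+2) + (2*Lp+1) \<le> L - 1" using Dbig L8 by linarith
    qed simp
    finally show ?thesis by (simp add: H_def)
  qed
  obtain n where nC: "H < n" "n \<le> 2 * H" and nUB: "n \<notin> UB"
  proof -
    have "\<not> {H<..2*H} \<subseteq> UB"
    proof
      assume "{H<..2*H} \<subseteq> UB"
      then have "card {H<..2*H} \<le> card UB" by (rule card_mono[OF finUB])
      then show False using cardUB by simp
    qed
    then obtain n0 where "n0 \<in> {H<..2*H}" "n0 \<notin> UB" by blast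
    then show ?thesis by (intro that[of n0]) auto
  qed
  have sH: "s < H" using s16 Hreal Hpos by linarith
  have LpL: "Lp < L" using LLp by linarith
  have HLp: "2^Lp \<le> H" unfolding H_def by (rule power_increasing) (use LLp in auto)
  have main: "n \<notin> subsums {a\<in>A. col a = i}"
    if agree: "\<forall>a\<in>A. 2^Lp < a \<and> a \<le> 2^L \<longrightarrow> col a = g a" for col i
  proof
    assume "n \<in> subsums {a\<in>A. col a = i}"
    then obtain F where nF: "n = \<Sum>F" and FS: "F \<subseteq> {a\<in>A. col a = i}" and finF: "finite F"
      unfolding subsums_def by blast
    define Fo where "Fo = {a\<in>F. a \<le> 2^Lp}"
    define Fn where "Fn = {a\<in>F. \<not> a \<le> 2^Lp}"
    have finFo: "finite Fo" "finite Fn" using finF by (auto simp: Fo_def Fn_def)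
    have Fsplit: "\<Sum>F = \<Sum>Fo + \<Sum>Fn"
    proof -
      have "F = Fo \<union> Fn" by (auto simp: Fo_def Fn_def)
      moreover have "\<Sum>(Fo \<union> Fn) = \<Sum>Fo + \<Sum>Fn"
        by (rule sum.union_disjoint) (use finFo in \<open>auto simp: Fo_def Fn_def\<close>)
      ultimately show ?thesis by simp
    qed
    have Fos: "\<Sum>Fo \<le> s" unfolding s_def
      by (rule sum_old_bound) (use finFo FS pos in \<open>auto simp: Fo_def\<close>)
    have Fnprop: "a \<in> A \<and> 2^Lp < a \<and> a \<le> 2^L \<and> g a = i \<and> (a \<in> RO \<or> a \<in> RG)" if aF: "a \<in> Fn" for a
    proof -
      have aA: "a \<in> A" "col a = i" "a \<in> F" using aF FS by (auto simp: Fn_def)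
      have alt: "2^Lp < a" using aF by (simp add: Fn_def)
      have "a \<le> \<Sum>F" by (rule member_le_sum) (use aA finF in auto)
      then have an: "a \<le> 2^L" using nF nC H2 by linarith
      have "g a = i" using agree aA alt an by auto
      moreover have "a \<in> RO \<or> a \<in> RG"
      proof (cases "32 * real D * real a < 2^L")
        case True then show ?thesis using aA alt by (simp add: RO_def)
      next
        case False
        have "real a \<le> 2^L" using an by (simp del: of_nat_power add: of_nat_power[symmetric])
        then show ?thesis using False aA alt by (simp add: RG_def)
      qed
      ultimately show ?thesis using aA alt an by simp
    qed
    show False
    proof (cases "Fn = {}")
      case True
      then have "n \<le> s" using nF Fsplit Fos by simp
      then show False using sH nC by linarith
    next
      case False
      then obtain a0 where a0: "a0 \<in> Fn" by blast
      show False
      proof (cases "a0 \<in> RO")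
        case True
        have ip: "i < p" using Fnprop[OF a0] True go_lt by (metis g_def)
        have sub: "Fn \<subseteq> {b\<in>RO. go b = i}"
        proof
          fix a assume aF: "a \<in> Fn"
          then have "g a = i" "a \<in> RO \<or> a \<in> RG" using Fnprop by auto
          then show "a \<in> {b\<in>RO. go b = i}" using ip by (auto simp: g_def split: if_splits)
        qed
        have "real (\<Sum>Fn) = (\<Sum>b\<in>Fn. real b)" by simp
        also have "\<dots> \<le> (\<Sum>b\<in>{b\<in>RO. go b = i}. real b)"
          by (rule sum_mono2) (use sub finRO in auto)
        finally have "real (\<Sum>Fn) + real s < real H" using owner_small[OF ip] by linarith
        then have "n < H" using nF Fsplit Fos by linarith
        then show False using nC by simp
      next
        case False
        then have a0RG: "a0 \<in> RG" and ia0: "i = p + gg a0" using Fnprop[OF a0] by (auto simp: g_def)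
        define j where "j = gg a0"
        have jq: "j < q" using gg_lt by (simp add: j_def)
        have sub: "Fn \<subseteq> B j"
        proof
          fix a assume aF: "a \<in> Fn"
          then have ga: "g a = i" "a \<in> RO \<or> a \<in> RG" using Fnprop by auto
          show "a \<in> B j"
          proof (cases "a \<in> RO")
            case True
            then have "go a = i" using ga by (simp add: g_def)
            then show ?thesis using go_lt ia0 by (metis not_add_less1)
          next
            case False
            then have "a \<in> RG" "p + gg a = i" using ga by (auto simp: g_def)
            then show ?thesis using ia0 by (simp add: B_def j_def)
          qed
        qed
        have "\<Sum>Fn \<le> n" using nF Fsplit by simp
        then have "real (\<Sum>Fn) \<le> 2^L" using nC H2
          by (metis (mono_tags, lifting) of_nat_le_iff of_nat_numeral of_nat_power order.trans)
        then have FnNS: "Fn \<in> NS j" using sub by (simp add: NS_def)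
        have "n = (\<lambda>(S,x). \<Sum>S + x) (Fn, \<Sum>Fo)" using nF Fsplit by simp
        moreover have "(Fn, \<Sum>Fo) \<in> NS j \<times> {..s}" using FnNS Fos by simp
        ultimately have "n \<in> Bad j" unfolding Bad_def by blast
        then have "n \<in> UB" using jq unfolding UB_def by blast
        then show False using nUB by simp
      qed
    qed
  qed
  show ?thesis
  proof (intro exI conjI)
    show "Lp < L" by (rule LpL)
    show "2^Lp < n" using HLp nC by linarith
    show "n \<le> 2^L" using nC H2 by simp
    show "\<forall>a. g a < r" by (rule g_lt)
    show "\<forall>col. (\<forall>a\<in>A. 2^Lp < a \<and> a \<le> 2^L \<longrightarrow> col a = g a) \<longrightarrow> (\<forall>i. n \<notin> subsums {a\<in>A. col a = i})"
      using main by blast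
  qed
qed



theorem theorem3p5:
  fixes r :: nat and A :: "nat set"
  assumes "r \<ge> 2"
    and "\<forall>a\<in>A. a > 0"
    and "\<exists>N. \<forall>n\<ge>N. real (count_upto A n) \<le> (real r - 1) / 140 * (log 2 (real n))^2"
  shows "\<not> ramsey_complete r A"
proof -
  obtain N0 where cnt: "\<forall>n\<ge>N0. real (count_upto A n) \<le> (real r - 1) / 140 * (log 2 (real n))^2"
    using assms(3) by blast
  define P where "P Lp L g n \<longleftrightarrow> Lp < L \<and> 2^Lp < n \<and> n \<le> 2^L \<and> (\<forall>a. g a < r) \<and>
     (\<forall>col. (\<forall>a\<in>A. 2^Lp < a \<and> a \<le> 2^L \<longrightarrow> col a = g a) \<longrightarrow> (\<forall>i. n \<notin> subsums {a\<in>A. col a = i}))"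
    for Lp L :: nat and g :: "nat \<Rightarrow> nat" and n :: nat
  have "\<forall>Lp. \<exists>y. P Lp (fst y) (fst (snd y)) (snd (snd y))"
  proof
    fix Lp
    obtain L g n where "P Lp L g n" using stage[OF assms(1) assms(2) cnt, of Lp] unfolding P_def by blast
    then show "\<exists>y. P Lp (fst y) (fst (snd y)) (snd (snd y))" by (intro exI[of _ "(L, g, n)"]) simp
  qed
  then obtain F where F: "\<forall>Lp. P Lp (fst (F Lp)) (fst (snd (F Lp))) (snd (snd (F Lp)))"
    by (metis choice)
  define Ls where "Ls t = ((\<lambda>x. fst (F x)) ^^ t) 0" for t
  have LsSuc: "Ls (Suc t) = fst (F (Ls t))" for t by (simp add: Ls_def)
  have Lsinc: "Ls t < Ls (Suc t)" for t using F LsSuc unfolding P_def by metis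
  have smono: "strict_mono Ls" using Lsinc by (simp add: strict_mono_Suc_iff)
  have Lsge: "t \<le> Ls t" for t using smono by (rule strict_mono_imp_increasing)
  define T where "T a = (LEAST t. a \<le> 2^(Ls (Suc t)))" for a :: nat
  define col where "col a = fst (snd (F (Ls (T a)))) a" for a
  have colr: "\<forall>a\<in>A. col a < r" using F unfolding col_def P_def by blast
  have Tt: "T a = t" if "2^(Ls t) < a" "a \<le> 2^(Ls (Suc t))" for a t
  proof -
    have le: "T a \<le> t" unfolding T_def by (rule Least_le) (use that in simp)
    have ex: "a \<le> 2^(Ls (Suc (T a)))" unfolding T_def by (rule LeastI) (use that in simp)
    have "\<not> T a < t"
    proof
      assume "T a < t"
      then have "Suc (T a) \<le> t" by simp
      then have "Ls (Suc (T a)) \<le> Ls t" using smono by (simp add: strict_mono_less_eq)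
      then have "(2::nat)^(Ls (Suc (T a))) \<le> 2^(Ls t)" by simp
      then show False using ex that by linarith
    qed
    then show ?thesis using le by simp
  qed
  show ?thesis
  proof
    assume "ramsey_complete r A"
    then obtain N where N: "\<forall>n\<ge>N. \<exists>i<r. n \<in> subsums {a\<in>A. col a = i}"
      unfolding ramsey_complete_def using colr by blast
    define t where "t = N"
    define n where "n = snd (snd (F (Ls t)))"
    have Pt: "P (Ls t) (Ls (Suc t)) (fst (snd (F (Ls t)))) n" using F LsSuc unfolding n_def by simp
    have "N < n"
    proof -
      have "N \<le> Ls t" using Lsge t_def by simp
      also have "Ls t < 2^(Ls t)" by (rule less_exp)
      also have "2^(Ls t) < n" using Pt unfolding P_def by simp
      finally show ?thesis .
    qed
    then have "n \<ge> N" by simp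
    then obtain i where "n \<in> subsums {a\<in>A. col a = i}" using N by blast
    moreover have "\<forall>a\<in>A. 2^(Ls t) < a \<and> a \<le> 2^(Ls (Suc t)) \<longrightarrow> col a = fst (snd (F (Ls t))) a"
    proof (intro ballI impI)
      fix a assume "a \<in> A" "2^(Ls t) < a \<and> a \<le> 2^(Ls (Suc t))"
      then have "T a = t" using Tt by blast
      then show "col a = fst (snd (F (Ls t))) a" unfolding col_def by simp
    qed
    ultimately show False using Pt unfolding P_def by blast
  qed
qed

end
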